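(* Let $N\ge2$, let $\mathbf{A}=[1\ 1\ \cdots\ 1]\in\mathbb{R}^{1\times N}$, let $1\le r<N$, let $i_1,\dots,i_r$ be distinct indices in $\{1,\dots,N\}$, and let $\mathbf{B}=[\vec e_{i_1},\dots,\vec e_{i_r}]^{\mathsf T}\in\mathbb{R}^{r\times N}$, where $\vec e_i$ are the standard basis vectors of $\mathbb{R}^N$. Then the principal angles $\theta_1\le\cdots\le\theta_{N-r}$ between the subspaces $\mathcal N(\mathbf{A})$ and $\mathcal N(\mathbf{B})$ satisfy $$\cos\theta_1=\cdots=\cos\theta_{N-r-1}=1\quad\text{and}\quad \cos\theta_{N-r}=\sqrt{\tfrac{r}{N}}.$$
   Context: $\mathcal N(\cdot)$ denotes the null space. For subspaces $\mathcal U,\mathcal V\subseteq\mathbb{R}^N$ with $\dim\mathcal U=p\le\dim\mathcal V$ (here $\mathcal U=\mathcal N(\mathbf B)$, of dimension $N-r$, and $\mathcal V=\mathcal N(\mathbf A)$, of dimension $N-1$), the principal angles $\theta_k\in[0,\pi/2]$, $k=1,\dots,p$, are defined recursively by $\cos\theta_k=\vec u_k^{\mathsf T}\vec v_k=\max_{\vec u\in\mathcal U}\max_{\vec v\in\mathcal V}\vec u^{\mathsf T}\vec v$ subject to $\|\vec u\|_2=\|\vec v\|_2=1$, $\vec u_j^{\mathsf T}\vec u=0$, $\vec v_j^{\mathsf T}\vec v=0$ for $j=1,\dots,k-1$. *)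

theory Defs
  imports "HOL-Analysis.Analysis"
begin

definition null_space_mat :: "real^'n^'m \<Rightarrow> (real^'n) set" where
  "null_space_mat M = {x. M *v x = 0}"

(* Indices are 0-based: the paper's theta_{k+1} corresponds to index k. *)
definition principal_vectors ::
  "('a::real_inner) set \<Rightarrow> 'a set \<Rightarrow> nat \<Rightarrow> (nat \<Rightarrow> 'a) \<Rightarrow> (nat \<Rightarrow> 'a) \<Rightarrow> bool" where
  "principal_vectors U V p u v \<longleftrightarrow>
     (\<forall>k<p. u k \<in> U \<and> v k \<in> V \<and> norm (u k) = 1 \<and> norm (v k) = 1 \<and>
        (\<forall>j<k. u j \<bullet> u k = 0 \<and> v j \<bullet> v k = 0) \<and>
        (\<forall>x\<in>U. \<forall>y\<in>V. norm x = 1 \<and> norm y = 1 \<and> (\<forall>j<k. u j \<bullet> x = 0 \<and> v j \<bullet> y = 0)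
            \<longrightarrow> x \<bullet> y \<le> u k \<bullet> v k))"

definition principal_angle :: "(nat \<Rightarrow> 'a::real_inner) \<Rightarrow> (nat \<Rightarrow> 'a) \<Rightarrow> nat \<Rightarrow> real" where
  "principal_angle u v k = arccos (u k \<bullet> v k)"

end

theory Submission
  imports Defs
begin

definition UU :: "'n::finite set \<Rightarrow> (real^'n) set" where
  "UU T = {x. \<forall>i. i \<notin> T \<longrightarrow> x$i = 0}"
definition VV :: "(real^'n::finite) set" where
  "VV = {x. (\<Sum>i\<in>UNIV. x$i) = 0}"
definition indT :: "'n::finite set \<Rightarrow> real^'n" where
  "indT T = (\<chi> i. if i \<in> T then 1 else 0)"
definition aT :: "'n::finite set \<Rightarrow> real^'n" where
  "aT T = (\<chi> i. (if i \<in> T then 1 else 0) - real (card T) / real CARD('n))"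

lemma aux_cancel: "(c::real) \<noteq> 0 \<Longrightarrow> a - a / c * c = 0" by simp

lemma aux_sgn: "(a::real) * sgn a = \<bar>a\<bar>" by (simp add: sgn_if)

lemma subspace_UU: "subspace (UU T)"
  unfolding subspace_def UU_def by auto

lemma subspace_VV: "subspace (VV :: (real^'n::finite) set)"
  unfolding subspace_def VV_def by (auto simp: sum.distrib sum_distrib_left[symmetric])

lemma dim_UU: "dim (UU (T::'n::finite set)) = card T"
  using dim_substandard_cart[of T] unfolding UU_def dim_vec_eq[symmetric] by simp

lemma indT_UU: "indT T \<in> UU T"
  unfolding UU_def indT_def by auto

lemma indT_inner_UU: "x \<in> UU T \<Longrightarrow> indT T \<bullet> x = (\<Sum>i\<in>UNIV. x$i)"
  unfolding UU_def indT_def inner_vec_def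
  by (intro sum.cong) auto

lemma indT_inner_self: "indT (T::'n::finite set) \<bullet> indT T = real (card T)"
proof -
  have "indT T \<bullet> indT T = (\<Sum>i\<in>UNIV. if i \<in> T then 1 else (0::real))"
    unfolding indT_def inner_vec_def by (intro sum.cong) auto
  also have "\<dots> = real (card T)" by (simp add: sum.If_cases)
  finally show ?thesis .
qed

lemma indT_notin_VV: "T \<noteq> {} \<Longrightarrow> indT (T::'n::finite set) \<notin> VV"
proof
  assume "T \<noteq> {}" "indT T \<in> VV"
  then have "indT T \<bullet> indT T = 0" using indT_inner_UU[OF indT_UU, of T] by (simp add: VV_def)
  moreover have "card T > 0" using \<open>T \<noteq> {}\<close> by (simp add: card_gt_0_iff)
  ultimately show False by (simp add: indT_inner_self)
qed

lemma decomp: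
  fixes T :: "'n::finite set"
  assumes "x \<in> UU T" "T \<noteq> {}"
  shows "x - ((indT T \<bullet> x) / real (card T)) *\<^sub>R indT T \<in> UU T \<inter> VV"
proof -
  let ?z = "x - ((indT T \<bullet> x) / real (card T)) *\<^sub>R indT T"
  have z: "?z \<in> UU T" using assms(1) indT_UU subspace_UU
    by (metis subspace_diff subspace_scale)
  have "card T > 0" using assms(2) by (simp add: card_gt_0_iff)
  have "indT T \<bullet> ?z = indT T \<bullet> x - ((indT T \<bullet> x) / real (card T)) * (indT T \<bullet> indT T)"
    by (simp add: inner_diff_right)
  also have "\<dots> = 0" unfolding indT_inner_self using \<open>card T > 0\<close>
    by (intro aux_cancel) (use assms(2) in auto)
  finally have "indT T \<bullet> ?z = 0" .
  then show ?thesis using z indT_inner_UU[OF z] by (simp add: VV_def)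
qed

lemma orth_is_multiple:
  fixes T :: "'n::finite set"
  assumes "x \<in> UU T" "T \<noteq> {}" "\<forall>w\<in>UU T \<inter> VV. x \<bullet> w = 0"
  shows "x = ((indT T \<bullet> x) / real (card T)) *\<^sub>R indT T"
proof -
  let ?a = "(indT T \<bullet> x) / real (card T)"
  let ?z = "x - ?a *\<^sub>R indT T"
  have zin: "?z \<in> UU T \<inter> VV" by (rule decomp[OF assms(1,2)])
  have "card T > 0" using assms(2) by (simp add: card_gt_0_iff)
  have "indT T \<bullet> ?z = indT T \<bullet> x - ((indT T \<bullet> x) / real (card T)) * (indT T \<bullet> indT T)"
    by (simp add: inner_diff_right)
  also have "\<dots> = 0" unfolding indT_inner_self using \<open>card T > 0\<close>
    by (intro aux_cancel) (use assms(2) in auto)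
  finally have "indT T \<bullet> ?z = 0" .
  moreover have "x \<bullet> ?z = 0" using assms(3) zin by blast
  ultimately have "?z \<bullet> ?z = 0" by (simp add: inner_diff_left)
  then show ?thesis by simp
qed

lemma dim_UUVV:
  fixes T :: "'n::finite set"
  assumes "T \<noteq> {}"
  shows "dim (UU T \<inter> VV) = card T - 1"
proof -
  have sub: "subspace (UU T \<inter> VV)" using subspace_UU subspace_VV by (rule subspace_inter)
  have "span (UU T \<inter> VV) \<subset> span (UU T)"
    using indT_UU[of T] indT_notin_VV[OF assms] sub subspace_UU[of T]
    by (metis Int_iff Int_lower1 psubsetI span_eq_iff span_mono)
  then have lt: "dim (UU T \<inter> VV) < card T" using dim_psubset dim_UU by metis
  have "UU T \<subseteq> span (insert (indT T) (UU T \<inter> VV))"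
  proof
    fix x assume x: "x \<in> UU T"
    let ?a = "(indT T \<bullet> x) / real (card T)"
    have "x - ?a *\<^sub>R indT T \<in> span (insert (indT T) (UU T \<inter> VV))"
      using decomp[OF x assms] by (simp add: span_base)
    moreover have "?a *\<^sub>R indT T \<in> span (insert (indT T) (UU T \<inter> VV))"
      by (simp add: span_base span_scale)
    ultimately show "x \<in> span (insert (indT T) (UU T \<inter> VV))"
      using span_add by fastforce
  qed
  then have "card T \<le> dim (insert (indT T) (UU T \<inter> VV))"
    using dim_UU dim_subset dim_span by metis
  also have "\<dots> \<le> dim (UU T \<inter> VV) + 1" by (simp add: dim_insert)
  finally show ?thesis using lt by linarith
qed

lemma aT_inner: "aT (T::'n::finite set) \<bullet> y = indT T \<bullet> y - real (card T) / real CARD('n) * (\<Sum>i\<in>UNIV. y$i)"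
  unfolding aT_def indT_def inner_vec_def
  by (simp add: left_diff_distrib sum_subtractf sum_distrib_left)

lemma aT_inner_VV: "y \<in> VV \<Longrightarrow> aT (T::'n::finite set) \<bullet> y = indT T \<bullet> y"
  by (simp add: aT_inner VV_def)

lemma aT_orth: "w \<in> UU T \<inter> VV \<Longrightarrow> aT (T::'n::finite set) \<bullet> w = 0"
  using aT_inner_VV[of w T] indT_inner_UU[of w T] by (simp add: VV_def)

lemma aT_VV: "aT (T::'n::finite set) \<in> VV"
proof -
  have "(\<Sum>i\<in>UNIV. aT T $ i) = (\<Sum>i\<in>UNIV. (if i \<in> T then 1 else 0)) - real CARD('n) * (real (card T) / real CARD('n))"
    unfolding aT_def by (simp add: sum_subtractf)
  also have "\<dots> = 0" by (simp add: sum.If_cases)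
  finally show ?thesis by (simp add: VV_def)
qed

lemma sum_indT: "(\<Sum>i\<in>UNIV. indT (T::'n::finite set) $ i) = real (card T)"
  unfolding indT_def by (simp add: sum.If_cases)

lemma indT_aT: "indT (T::'n::finite set) \<bullet> aT T = real (card T) * (real CARD('n) - real (card T)) / real CARD('n)"
proof -
  have "indT T \<bullet> aT T = aT T \<bullet> indT T" by (simp add: inner_commute)
  also have "\<dots> = real (card T) - real (card T) / real CARD('n) * real (card T)"
    by (simp add: aT_inner indT_inner_self sum_indT)
  also have "\<dots> = real (card T) * (real CARD('n) - real (card T)) / real CARD('n)"
    by (simp add: field_simps)
  finally show ?thesis .
qed

lemma aT_self: "aT (T::'n::finite set) \<bullet> aT T = real (card T) * (real CARD('n) - real (card T)) / real CARD('n)"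
  using aT_inner_VV[OF aT_VV, of T T] indT_aT[of T] by simp

lemma sqrt_aux:
  assumes "a\<^sup>2 * p = (1::real)" "p > 0"
  shows "\<bar>a\<bar> * sqrt (p * M) = sqrt M"
proof -
  have "\<bar>a\<bar> * sqrt (p * M) = sqrt (a\<^sup>2 * p * M)"
    by (simp add: real_sqrt_mult mult.assoc)
  then show ?thesis using assms by simp
qed

lemma multiple_facts:
  fixes T :: "'n::finite set"
  assumes "x \<in> UU T" "T \<noteq> {}" "\<forall>w\<in>UU T \<inter> VV. x \<bullet> w = 0" "norm x = 1"
  defines "a \<equiv> (indT T \<bullet> x) / real (card T)"
  shows "x = a *\<^sub>R indT T" "a\<^sup>2 * real (card T) = 1"
    "\<bar>a\<bar> * norm (aT T) = sqrt ((real CARD('n) - real (card T)) / real CARD('n))"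
proof -
  show x: "x = a *\<^sub>R indT T" unfolding a_def by (rule orth_is_multiple[OF assms(1-3)])
  have "x \<bullet> x = 1" using assms(4) by (simp add: dot_square_norm)
  then have "(a *\<^sub>R indT T) \<bullet> (a *\<^sub>R indT T) = 1" using x by simp
  then show a2: "a\<^sup>2 * real (card T) = 1"
    by (simp add: indT_inner_self power2_eq_square)
  have "real (card T) > 0" using assms(2) by (simp add: card_gt_0_iff)
  have "norm (aT T) = sqrt (aT T \<bullet> aT T)" by (rule norm_eq_sqrt_inner)
  also have "\<dots> = sqrt (real (card T) * ((real CARD('n) - real (card T)) / real CARD('n)))"
    by (simp only: aT_self times_divide_eq_right)
  finally have "\<bar>a\<bar> * norm (aT T) = \<bar>a\<bar> * sqrt (real (card T) * ((real CARD('n) - real (card T)) / real CARD('n)))"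
    by simp
  also have "\<dots> = sqrt ((real CARD('n) - real (card T)) / real CARD('n))"
    by (rule sqrt_aux[OF a2 \<open>real (card T) > 0\<close>])
  finally show "\<bar>a\<bar> * norm (aT T) = sqrt ((real CARD('n) - real (card T)) / real CARD('n))" .
qed

lemma bound:
  fixes T :: "'n::finite set"
  assumes "x \<in> UU T" "T \<noteq> {}" "\<forall>w\<in>UU T \<inter> VV. x \<bullet> w = 0" "norm x = 1"
    "y \<in> VV" "norm y = 1"
  shows "x \<bullet> y \<le> sqrt ((real CARD('n) - real (card T)) / real CARD('n))"
proof -
  define a where "a = (indT T \<bullet> x) / real (card T)"
  note mf = multiple_facts[OF assms(1-4), folded a_def]
  have "x \<bullet> y = a * (aT T \<bullet> y)"
    by (subst mf(1)) (simp add: aT_inner_VV[OF assms(5)])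
  also have "\<dots> \<le> \<bar>a\<bar> * \<bar>aT T \<bullet> y\<bar>" by (metis abs_ge_self abs_mult)
  also have "\<dots> \<le> \<bar>a\<bar> * norm (aT T)"
    using Cauchy_Schwarz_ineq2[of "aT T" y] assms(6) by (simp add: mult_left_mono)
  finally show ?thesis using mf(3) by simp
qed

lemma attain:
  fixes T :: "'n::finite set"
  assumes "x \<in> UU T" "T \<noteq> {}" "\<forall>w\<in>UU T \<inter> VV. x \<bullet> w = 0" "norm x = 1"
    "T \<noteq> UNIV"
  shows "\<exists>y\<in>VV. norm y = 1 \<and> (\<forall>w\<in>UU T \<inter> VV. y \<bullet> w = 0) \<and>
           x \<bullet> y = sqrt ((real CARD('n) - real (card T)) / real CARD('n))"
proof -
  define a where "a = (indT T \<bullet> x) / real (card T)"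
  note mf = multiple_facts[OF assms(1-4), folded a_def]
  have "card T < CARD('n)" using assms(5) psubset_card_mono[of UNIV T] by auto
  moreover have "real (card T) > 0" using assms(2) by (simp add: card_gt_0_iff)
  ultimately have "aT T \<bullet> aT T > 0" by (simp add: aT_self)
  then have na: "norm (aT T) > 0" by (simp add: norm_eq_sqrt_inner)
  have a0: "a \<noteq> 0" using mf(2) by auto
  define y where "y = (sgn a / norm (aT T)) *\<^sub>R aT T"
  have "y \<in> VV" unfolding y_def using aT_VV subspace_VV subspace_scale by blast
  moreover have "norm y = 1" unfolding y_def using na a0 by (simp add: abs_sgn_eq)
  moreover have "\<forall>w\<in>UU T \<inter> VV. y \<bullet> w = 0" unfolding y_def using aT_orth by auto
  moreover have "x \<bullet> y = sqrt ((real CARD('n) - real (card T)) / real CARD('n))"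
  proof -
    have "x \<bullet> y = a * sgn a / norm (aT T) * (indT T \<bullet> aT T)"
      unfolding y_def by (subst mf(1)) simp
    also have "indT T \<bullet> aT T = norm (aT T) * norm (aT T)"
      using indT_aT[of T] aT_self[of T] by (simp add: dot_square_norm power2_eq_square)
    finally have "x \<bullet> y = \<bar>a\<bar> * norm (aT T)" using na
      by (simp add: aux_sgn mult.assoc[symmetric])
    then show ?thesis using mf(3) by simp
  qed
  ultimately show ?thesis by blast
qed

lemma unit_orth_exists:
  fixes W :: "(real^'n::finite) set"
  assumes "subspace W" "F \<subseteq> W" "finite F" "card F < dim W"
  shows "\<exists>w\<in>W. norm w = 1 \<and> (\<forall>f\<in>F. f \<bullet> w = 0)"
proof -
  have sF: "span F \<subseteq> W" by (rule span_minimal[OF assms(2) assms(1)])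
  have sW: "span W = W" using assms(1) by (simp add: span_eq_iff)
  have "span F \<noteq> W"
  proof
    assume "span F = W"
    then have "dim W = dim F" by (metis dim_span)
    also have "\<dots> \<le> card F" using assms(3) by (intro dim_le_card) (auto intro: span_base)
    finally show False using assms(4) by simp
  qed
  then have psub: "span F \<subset> span W" unfolding sW using sF by blast
  then obtain x where x: "x \<noteq> 0" "x \<in> span W" "\<And>y. y \<in> span F \<Longrightarrow> orthogonal x y"
    using orthogonal_to_subspace_exists_gen[OF psub] by blast
  define w where "w = (1 / norm x) *\<^sub>R x"
  have "w \<in> W" unfolding w_def using x(2) sW assms(1) by (simp add: subspace_scale)
  moreover have "norm w = 1" unfolding w_def using x(1) by simp
  moreover have "\<forall>f\<in>F. f \<bullet> w = 0"
    using x(3) unfolding w_def orthogonal_def by (auto intro: span_base simp: inner_commute)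
  ultimately show ?thesis by blast
qed

lemma unit_eq: "norm (a::'a::real_inner) = 1 \<Longrightarrow> norm b = 1 \<Longrightarrow> a \<bullet> b = 1 \<Longrightarrow> a = b"
proof -
  assume "norm a = 1" "norm b = 1" "a \<bullet> b = 1"
  have "(a - b) \<bullet> (a - b) = a \<bullet> a - a \<bullet> b - (b \<bullet> a - b \<bullet> b)"
    by (simp only: inner_diff_left inner_diff_right)
  also have "\<dots> = 0" using \<open>norm a = 1\<close> \<open>norm b = 1\<close> \<open>a \<bullet> b = 1\<close>
    by (simp add: dot_square_norm inner_commute[of b a])
  finally have "(a - b) \<bullet> (a - b) = 0" .
  then show "a = b" by (simp only: inner_eq_zero_iff right_minus_eq)
qed

lemma pv_eq:
  fixes T :: "'n::finite set"
  assumes pv: "principal_vectors (UU T) VV (card T) u v" and T: "T \<noteq> {}"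
  shows "\<forall>k. k < card T - 1 \<longrightarrow> u k = v k \<and> u k \<bullet> v k = 1"
proof
  fix k
  have P: "\<And>k. k < card T \<Longrightarrow> u k \<in> UU T \<and> v k \<in> VV \<and> norm (u k) = 1 \<and> norm (v k) = 1 \<and>
        (\<forall>j<k. u j \<bullet> u k = 0 \<and> v j \<bullet> v k = 0) \<and>
        (\<forall>x\<in>UU T. \<forall>y\<in>VV. norm x = 1 \<and> norm y = 1 \<and> (\<forall>j<k. u j \<bullet> x = 0 \<and> v j \<bullet> y = 0)
            \<longrightarrow> x \<bullet> y \<le> u k \<bullet> v k)"
    using pv unfolding principal_vectors_def by blast
  show "k < card T - 1 \<longrightarrow> u k = v k \<and> u k \<bullet> v k = 1"
  proof (induction k rule: less_induct)
    case (less k)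
    show ?case
    proof
      assume k: "k < card T - 1"
      have IH: "\<And>j. j < k \<Longrightarrow> u j = v j" using less k by auto
      define F where "F = u ` {..<k}"
      have FW: "F \<subseteq> UU T \<inter> VV"
      proof
        fix f assume "f \<in> F"
        then obtain j where j: "j < k" "f = u j" unfolding F_def by auto
        then have "u j \<in> UU T" "v j \<in> VV" using P[of j] k by auto
        then show "f \<in> UU T \<inter> VV" using IH[OF j(1)] j(2) by simp
      qed
      have "card F \<le> k" unfolding F_def using card_image_le[of "{..<k}" u] by simp
      then have "card F < dim (UU T \<inter> VV)" using k dim_UUVV[OF T] by simp
      then obtain w where w: "w \<in> UU T \<inter> VV" "norm w = 1" "\<forall>f\<in>F. f \<bullet> w = 0"
        using unit_orth_exists[OF subspace_inter[OF subspace_UU subspace_VV] FW] unfolding F_def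
        by blast
      have Pk: "u k \<in> UU T \<and> v k \<in> VV \<and> norm (u k) = 1 \<and> norm (v k) = 1 \<and>
        (\<forall>x\<in>UU T. \<forall>y\<in>VV. norm x = 1 \<and> norm y = 1 \<and> (\<forall>j<k. u j \<bullet> x = 0 \<and> v j \<bullet> y = 0)
            \<longrightarrow> x \<bullet> y \<le> u k \<bullet> v k)" using P[of k] k by auto
      have "\<forall>j<k. u j \<bullet> w = 0 \<and> v j \<bullet> w = 0" using w(3) IH unfolding F_def by auto
      then have "w \<bullet> w \<le> u k \<bullet> v k" using Pk w by auto
      moreover have "w \<bullet> w = 1" using w(2) by (simp add: dot_square_norm)
      moreover have "u k \<bullet> v k \<le> 1" using norm_cauchy_schwarz[of "u k" "v k"] Pk by simp
      ultimately have "u k \<bullet> v k = 1" by simp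
      then show "u k = v k \<and> u k \<bullet> v k = 1" using unit_eq Pk by blast
    qed
  qed
qed

lemma pv_last:
  fixes T :: "'n::finite set"
  assumes pv: "principal_vectors (UU T) VV (card T) u v" and T: "T \<noteq> {}" "T \<noteq> UNIV"
  shows "u (card T - 1) \<bullet> v (card T - 1) = sqrt ((real CARD('n) - real (card T)) / real CARD('n))"
proof -
  have P: "\<And>k. k < card T \<Longrightarrow> u k \<in> UU T \<and> v k \<in> VV \<and> norm (u k) = 1 \<and> norm (v k) = 1 \<and>
        (\<forall>j<k. u j \<bullet> u k = 0 \<and> v j \<bullet> v k = 0) \<and>
        (\<forall>x\<in>UU T. \<forall>y\<in>VV. norm x = 1 \<and> norm y = 1 \<and> (\<forall>j<k. u j \<bullet> x = 0 \<and> v j \<bullet> y = 0)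
            \<longrightarrow> x \<bullet> y \<le> u k \<bullet> v k)"
    using pv unfolding principal_vectors_def by blast
  have eq: "\<And>k. k < card T - 1 \<Longrightarrow> u k = v k" using pv_eq[OF pv T(1)] by blast
  have cT: "card T > 0" using T(1) by (simp add: card_gt_0_iff)
  define k0 where "k0 = card T - 1"
  have k0: "k0 < card T" unfolding k0_def using cT by simp
  have Pk: "u k0 \<in> UU T \<and> v k0 \<in> VV \<and> norm (u k0) = 1 \<and> norm (v k0) = 1 \<and>
        (\<forall>j<k0. u j \<bullet> u k0 = 0 \<and> v j \<bullet> v k0 = 0) \<and>
        (\<forall>x\<in>UU T. \<forall>y\<in>VV. norm x = 1 \<and> norm y = 1 \<and> (\<forall>j<k0. u j \<bullet> x = 0 \<and> v j \<bullet> y = 0)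
            \<longrightarrow> x \<bullet> y \<le> u k0 \<bullet> v k0)" using P[OF k0] by blast
  define B where "B = u ` {..<k0}"
  have BW: "B \<subseteq> UU T \<inter> VV"
  proof
    fix f assume "f \<in> B"
    then obtain j where j: "j < k0" "f = u j" unfolding B_def by auto
    then have "u j \<in> UU T" "v j \<in> VV" using P[of j] k0 by auto
    then show "f \<in> UU T \<inter> VV" using eq[of j] j k0_def by simp
  qed
  have orth: "\<And>i j. i < k0 \<Longrightarrow> j < k0 \<Longrightarrow> i \<noteq> j \<Longrightarrow> u i \<bullet> u j = 0"
  proof -
    fix i j assume ij: "i < k0" "j < k0" "i \<noteq> j"
    show "u i \<bullet> u j = 0"
    proof (cases "i < j")
      case True then show ?thesis using P[of j] ij k0 by auto
    next
      case False then have "j < i" using ij by simp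
      then show ?thesis using P[of i] ij k0 by (auto simp: inner_commute)
    qed
  qed
  have norm1: "\<And>j. j < k0 \<Longrightarrow> norm (u j) = 1" using P k0 by auto
  have inj: "inj_on u {..<k0}"
  proof (rule inj_onI)
    fix i j assume "i \<in> {..<k0}" "j \<in> {..<k0}" "u i = u j"
    moreover have "u j \<bullet> u j = 1" using norm1[of j] \<open>j \<in> {..<k0}\<close> by (simp add: dot_square_norm)
    ultimately show "i = j" using orth[of i j] by force
  qed
  have "pairwise orthogonal B" unfolding B_def pairwise_def orthogonal_def using orth by auto
  moreover have "0 \<notin> B" unfolding B_def using norm1 by force
  ultimately have indB: "independent B" by (rule pairwise_orthogonal_independent)
  have "card B = k0" unfolding B_def using card_image[OF inj] by simp
  then have "dim (UU T \<inter> VV) \<le> card B" using dim_UUVV[OF T(1)] k0_def by simp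
  then have spanB: "UU T \<inter> VV \<subseteq> span B" by (rule card_ge_dim_independent[OF BW indB])
  have perp: "\<forall>w\<in>UU T \<inter> VV. u k0 \<bullet> w = 0"
  proof
    fix w assume "w \<in> UU T \<inter> VV"
    then have "w \<in> span B" using spanB by blast
    moreover have "\<And>y. y \<in> B \<Longrightarrow> orthogonal (u k0) y"
      unfolding B_def orthogonal_def using Pk by (auto simp: inner_commute)
    ultimately have "orthogonal (u k0) w" by (rule orthogonal_to_span)
    then show "u k0 \<bullet> w = 0" by (simp add: orthogonal_def)
  qed
  have up: "u k0 \<bullet> v k0 \<le> sqrt ((real CARD('n) - real (card T)) / real CARD('n))"
    using bound[OF _ T(1) perp] Pk by blast
  obtain y where y: "y \<in> VV" "norm y = 1" "\<forall>w\<in>UU T \<inter> VV. y \<bullet> w = 0"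
    "u k0 \<bullet> y = sqrt ((real CARD('n) - real (card T)) / real CARD('n))"
    using attain[OF _ T(1) perp _ T(2)] Pk by blast
  have "\<forall>j<k0. u j \<bullet> u k0 = 0 \<and> v j \<bullet> y = 0"
  proof (intro allI impI conjI)
    fix j assume j: "j < k0"
    then show "u j \<bullet> u k0 = 0" using Pk by blast
    have "v j \<in> UU T \<inter> VV" using BW eq[of j] j k0_def unfolding B_def by auto
    then have "y \<bullet> v j = 0" using y(3) by blast
    then show "v j \<bullet> y = 0" by (simp add: inner_commute)
  qed
  then have "u k0 \<bullet> y \<le> u k0 \<bullet> v k0" using Pk y by blast
  then show ?thesis using up y(4) k0_def by simp
qed

lemma exist_pv:
  fixes T :: "'n::finite set"
  assumes T: "T \<noteq> {}" "T \<noteq> UNIV"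
  shows "\<exists>u v. principal_vectors (UU T) VV (card T) u v"
proof -
  have cT: "card T > 0" using T(1) by (simp add: card_gt_0_iff)
  define k0 where "k0 = card T - 1"
  have sub: "subspace (UU T \<inter> VV)" using subspace_UU subspace_VV by (rule subspace_inter)
  obtain B where B: "B \<subseteq> UU T \<inter> VV" "pairwise orthogonal B" "\<And>x. x \<in> B \<Longrightarrow> norm x = 1"
    "independent B" "card B = dim (UU T \<inter> VV)" "span B = UU T \<inter> VV"
    using orthonormal_basis_subspace[OF sub] by blast
  have cB: "card B = k0" using B(5) dim_UUVV[OF T(1)] k0_def by simp
  have fB: "finite B" using B(4) by (rule finiteI_independent)
  obtain e where e: "bij_betw e {0..<k0} B" using ex_bij_betw_nat_finite[OF fB] cB by auto
  have eB: "\<And>j. j < k0 \<Longrightarrow> e j \<in> B" using e by (auto simp: bij_betw_def)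
  have eorth: "\<And>i j. i < k0 \<Longrightarrow> j < k0 \<Longrightarrow> i \<noteq> j \<Longrightarrow> e i \<bullet> e j = 0"
  proof -
    fix i j assume ij: "i < k0" "j < k0" "i \<noteq> j"
    then have "e i \<noteq> e j" using e by (auto simp: bij_betw_def inj_on_def)
    then show "e i \<bullet> e j = 0" using B(2) eB ij unfolding pairwise_def orthogonal_def by blast
  qed
  define x0 where "x0 = (1 / sqrt (real (card T))) *\<^sub>R indT T"
  have x0U: "x0 \<in> UU T" unfolding x0_def using indT_UU subspace_UU subspace_scale by blast
  have "x0 \<bullet> x0 = (1 / sqrt (real (card T)))\<^sup>2 * real (card T)"
    unfolding x0_def by (simp add: indT_inner_self power2_eq_square)
  also have "\<dots> = 1" using cT T(1) by (simp add: power_divide)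
  finally have "x0 \<bullet> x0 = 1" .
  then have x0n: "norm x0 = 1" by (simp add: norm_eq_sqrt_inner)
  have x0p: "\<forall>w\<in>UU T \<inter> VV. x0 \<bullet> w = 0"
    unfolding x0_def by (auto simp: VV_def indT_inner_UU)
  obtain y0 where y0: "y0 \<in> VV" "norm y0 = 1" "\<forall>w\<in>UU T \<inter> VV. y0 \<bullet> w = 0"
    "x0 \<bullet> y0 = sqrt ((real CARD('n) - real (card T)) / real CARD('n))"
    using attain[OF x0U T(1) x0p x0n T(2)] by blast
  define u where "u k = (if k < k0 then e k else x0)" for k
  define v where "v k = (if k < k0 then e k else y0)" for k
  have "principal_vectors (UU T) VV (card T) u v"
    unfolding principal_vectors_def
  proof (intro allI impI)
    fix k assume k: "k < card T"
    show "u k \<in> UU T \<and> v k \<in> VV \<and> norm (u k) = 1 \<and> norm (v k) = 1 \<and>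
        (\<forall>j<k. u j \<bullet> u k = 0 \<and> v j \<bullet> v k = 0) \<and>
        (\<forall>x\<in>UU T. \<forall>y\<in>VV. norm x = 1 \<and> norm y = 1 \<and> (\<forall>j<k. u j \<bullet> x = 0 \<and> v j \<bullet> y = 0)
            \<longrightarrow> x \<bullet> y \<le> u k \<bullet> v k)"
    proof (cases "k < k0")
      case True
      have ek: "e k \<in> UU T \<inter> VV" "norm (e k) = 1" using eB[OF True] B(1,3) by auto
      have ee: "e k \<bullet> e k = 1" using ek(2) by (simp add: dot_square_norm)
      have "\<forall>j<k. e j \<bullet> e k = 0" using eorth True by auto
      moreover have "\<forall>x\<in>UU T. \<forall>y\<in>VV. norm x = 1 \<and> norm y = 1 \<longrightarrow> x \<bullet> y \<le> 1"
        using norm_cauchy_schwarz by (metis mult_1)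
      ultimately show ?thesis using True ek ee unfolding u_def v_def by auto
    next
      case False
      then have kk: "k = k0" using k k0_def by simp
      have "\<forall>j<k. e j \<bullet> x0 = 0 \<and> e j \<bullet> y0 = 0"
      proof (intro allI impI)
        fix j assume "j < k"
        then have "e j \<in> UU T \<inter> VV" using eB kk B(1) by auto
        then have a: "x0 \<bullet> e j = 0" "y0 \<bullet> e j = 0" using x0p y0(3) by blast+
        then show "e j \<bullet> x0 = 0 \<and> e j \<bullet> y0 = 0" by (simp add: inner_commute[of "e j"])
      qed
      moreover have "\<forall>x\<in>UU T. \<forall>y\<in>VV. norm x = 1 \<and> norm y = 1 \<and> (\<forall>j<k. e j \<bullet> x = 0)
            \<longrightarrow> x \<bullet> y \<le> x0 \<bullet> y0"
      proof (intro ballI impI)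
        fix x y :: "real^'n" assume xy: "x \<in> UU T" "y \<in> VV" "norm x = 1 \<and> norm y = 1 \<and> (\<forall>j<k. e j \<bullet> x = 0)"
        have xp: "\<forall>w\<in>UU T \<inter> VV. x \<bullet> w = 0"
        proof
          fix w assume "w \<in> UU T \<inter> VV"
          then have "w \<in> span B" using B(6) by simp
          moreover have "\<And>b. b \<in> B \<Longrightarrow> orthogonal x b"
          proof -
            fix b assume "b \<in> B"
            then obtain j where "j < k0" "b = e j" using e by (auto simp: bij_betw_def)
            then show "orthogonal x b" using xy kk by (simp add: orthogonal_def inner_commute)
          qed
          ultimately have "orthogonal x w" by (rule orthogonal_to_span)
          then show "x \<bullet> w = 0" by (simp add: orthogonal_def)
        qed
        show "x \<bullet> y \<le> x0 \<bullet> y0" using bound[OF xy(1) T(1) xp _ xy(2)] xy(3) y0(4) by simp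
      qed
      ultimately show ?thesis using False kk x0U x0n y0 unfolding u_def v_def by auto
    qed
  qed
  then show ?thesis by blast
qed

theorem lemma2p4:
  fixes idx :: "'r::finite \<Rightarrow> 'n::finite"
    and A :: "real^'n^1" and B :: "real^'n^'r"
  assumes "CARD('n) \<ge> 2"
    and "CARD('r) < CARD('n)"
    and "inj idx"
    and "A = (\<chi> i j. 1)"
    and "B = (\<chi> k j. if j = idx k then 1 else 0)"
  shows "(\<exists>u v. principal_vectors (null_space_mat B) (null_space_mat A) (CARD('n) - CARD('r)) u v)
       \<and> (\<forall>u v. principal_vectors (null_space_mat B) (null_space_mat A) (CARD('n) - CARD('r)) u v \<longrightarrow>
            (\<forall>k < CARD('n) - CARD('r) - 1. cos (principal_angle u v k) = 1)
          \<and> cos (principal_angle u v (CARD('n) - CARD('r) - 1)) = sqrt (real CARD('r) / real CARD('n)))"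
proof -
  define T where "T = - range idx"
  have cr: "card (range idx) = CARD('r)" using assms(3) by (simp add: card_image)
  have cT: "card T = CARD('n) - CARD('r)"
    unfolding T_def Compl_eq_Diff_UNIV using cr by (simp add: card_Diff_subset)
  have T1: "T \<noteq> {}" using cT assms(2) by (metis card.empty zero_less_diff less_irrefl)
  have T2: "T \<noteq> UNIV" unfolding T_def by auto
  have ifm: "\<And>P (y::real). (if P then 1 else 0) * y = (if P then y else 0)" by simp
  have Bx: "\<And>x. B *v x = (\<chi> k. x $ idx k)"
    unfolding assms(5) matrix_vector_mult_def by (simp add: vec_eq_iff ifm)
  have NB: "null_space_mat B = UU T"
    unfolding null_space_mat_def UU_def T_def Bx by (auto simp: vec_eq_iff)
  have NA: "null_space_mat A = VV"
    unfolding null_space_mat_def VV_def assms(4)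
    by (auto simp: matrix_vector_mult_def vec_eq_iff)
  have rr: "real CARD('n) - real (card T) = real CARD('r)" using cT assms(2) by simp
  show ?thesis
    unfolding NB NA cT[symmetric]
  proof (intro conjI allI impI)
    show "\<exists>u v. principal_vectors (UU T) VV (card T) u v" by (rule exist_pv[OF T1 T2])
  next
    fix u v k assume pv: "principal_vectors (UU T) VV (card T) u v" and k: "k < card T - 1"
    have "u k \<bullet> v k = 1" using pv_eq[OF pv T1] k by blast
    then show "cos (principal_angle u v k) = 1" by (simp add: principal_angle_def)
  next
    fix u v assume pv: "principal_vectors (UU T) VV (card T) u v"
    have e: "u (card T - 1) \<bullet> v (card T - 1) = sqrt (real CARD('r) / real CARD('n))"
      using pv_last[OF pv T1 T2] rr by simp
    have "real CARD('r) / real CARD('n) \<le> 1" using assms(2) by simp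
    then have "sqrt (real CARD('r) / real CARD('n)) \<le> 1" by simp
    then show "cos (principal_angle u v (card T - 1)) = sqrt (real CARD('r) / real CARD('n))"
      unfolding principal_angle_def e
      by (intro cos_arccos) (auto intro: order_trans[OF _ real_sqrt_ge_zero])
  qed
qed

end
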